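(* Let $n=p_1p_2\cdots p_r$, where $p_1,\ldots,p_r$ are distinct primes, and let $a,b$ be two distinct proper divisors of $n$ (i.e. divisors not in $\{1,n\}$) such that $a/b=p_k/p_l$ for some $k,l\in\{1,\ldots,r\}$. If $a<b$, then $\deg(a)>\deg(b)$ in $\mathcal{P}(C_n)$.
   Context: For a finite group $G$, the power graph $\mathcal{P}(G)$ is the simple undirected graph with vertex set $G$ in which two distinct vertices are adjacent if one is an integral power of the other. $C_n$ denotes the cyclic group of order $n$, identified with $\mathbb{Z}_n=\{0,1,\ldots,n-1\}$, so a divisor $d<n$ of $n$ is regarded as the element $d\in\mathbb{Z}_n$. $\deg(a)$ is the degree of vertex $a$ in $\mathcal{P}(C_n)$. *)

theory Defs
  imports Complex_Main "HOL-Computational_Algebra.Primes"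
begin

text \<open>Power graph of the cyclic group C_n, identified with Z_n = {0,...,n-1} (additive).\<close>
definition cyc_pow_adj :: "nat \<Rightarrow> nat \<Rightarrow> nat \<Rightarrow> bool" where
  "cyc_pow_adj n x y \<longleftrightarrow> x < n \<and> y < n \<and> x \<noteq> y \<and>
     ((\<exists>k::int. int y = (k * int x) mod int n) \<or> (\<exists>k::int. int x = (k * int y) mod int n))"

definition cyc_pow_deg :: "nat \<Rightarrow> nat \<Rightarrow> nat" where
  "cyc_pow_deg n a = card {x. cyc_pow_adj n a x}"

end

theory Submission
  imports Defs "HOL-Number_Theory.Number_Theory"
begin

lemma pow_iff:
  fixes n x y :: nat
  assumes "n > 0" "y < n"
  shows "(\<exists>k::int. int y = (k * int x) mod int n) \<longleftrightarrow> gcd x n dvd y"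
proof
  assume "\<exists>k::int. int y = (k * int x) mod int n"
  then obtain k where k: "int y = (k * int x) mod int n" by blast
  have "int y = k * int x - (k * int x div int n) * int n"
    using k by (simp add: minus_div_mult_eq_mod)
  moreover have "gcd (int x) (int n) dvd k * int x - (k * int x div int n) * int n"
    by (simp add: dvd_diff)
  ultimately have "gcd (int x) (int n) dvd int y" by simp
  then show "gcd x n dvd y" by (metis gcd_int_int_eq int_dvd_int_iff)
next
  assume "gcd x n dvd y"
  then obtain t where t: "y = gcd x n * t" by blast
  obtain u v :: int where uv: "u * int x + v * int n = gcd (int x) (int n)" using bezout_int by blast
  have "int y = int t * (u * int x + v * int n)" using t uv by simp
  hence "int y mod int n = (int t * u * int x + (int t * v) * int n) mod int n"
    by (simp add: algebra_simps)
  also have "\<dots> = (int t * u * int x) mod int n" by simp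
  finally have "int y = (int t * u * int x) mod int n" using assms by simp
  then show "\<exists>k::int. int y = (k * int x) mod int n" by blast
qed

lemma adj_iff:
  fixes n x y :: nat
  assumes "n > 0" "x < n" "y < n"
  shows "cyc_pow_adj n x y \<longleftrightarrow> x \<noteq> y \<and> (gcd x n dvd gcd y n \<or> gcd y n dvd gcd x n)"
proof -
  have "gcd x n dvd y \<longleftrightarrow> gcd x n dvd gcd y n" by simp
  moreover have "gcd y n dvd x \<longleftrightarrow> gcd y n dvd gcd x n" by simp
  ultimately show ?thesis using pow_iff[OF assms(1) assms(3), of x] pow_iff[OF assms(1) assms(2), of y] assms
    unfolding cyc_pow_adj_def by blast
qed


lemma crt_ex:
  fixes l M u v :: nat
  assumes "coprime l M" "l > 0" "M > 0"
  shows "\<exists>z. z < l * M \<and> z mod l = u mod l \<and> z mod M = v mod M"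
proof -
  obtain x where x: "[x = u] (mod l)" "[x = v] (mod M)"
    using binary_chinese_remainder_nat[OF assms(1)] by blast
  have "x mod (l*M) mod l = x mod l" by (simp add: mod_mod_cancel)
  moreover have "x mod (l*M) mod M = x mod M" by (metis mod_mod_cancel dvd_triv_right)
  moreover have "x mod (l*M) < l * M" using assms by simp
  ultimately show ?thesis using x unfolding cong_def by metis
qed

lemma coprime_prod_not:
  fixes p :: nat and A :: "nat set"
  assumes "finite A" "\<forall>q\<in>A. prime q" "prime p" "p \<notin> A"
  shows "coprime p (\<Prod>A)"
proof -
  have "\<not> p dvd \<Prod>A"
  proof
    assume "p dvd \<Prod>A"
    then obtain q where "q \<in> A" "p dvd q" using prime_dvd_prod_iff[OF assms(1) assms(3), of id] by auto
    then have "p = q" using primes_dvd_imp_eq assms by blast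
    with \<open>q \<in> A\<close> assms(4) show False by simp
  qed
  then show ?thesis using assms(3) prime_imp_coprime by blast
qed

theorem lemma2p4:
  fixes P :: "nat set" and n a b :: nat
  assumes "finite P"
    and "\<forall>p\<in>P. prime p"
    and "n = \<Prod>P"
    and "a dvd n" and "a \<notin> {1, n}"
    and "b dvd n" and "b \<notin> {1, n}"
    and "a \<noteq> b"
    and "\<exists>k\<in>P. \<exists>l\<in>P. real a / real b = real k / real l"
    and "a < b"
  shows "cyc_pow_deg n a > cyc_pow_deg n b"
proof -
  obtain k l where kP: "k \<in> P" and lP: "l \<in> P" and rat: "real a / real b = real k / real l"
    using assms(9) by blast
  have pk: "prime k" and pl: "prime l" using assms(2) kP lP by auto
  have k0: "k > 0" and l0: "l > 0" using pk pl prime_gt_0_nat by auto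
  have n0: "n > 0" using assms(1,2,3) by (metis prime_gt_0_nat prod_pos)
  have a0: "a > 0" using assms(4) n0 by (metis dvd_0_left_iff neq0_conv)
  have b0: "b > 0" using assms(6) n0 by (metis dvd_0_left_iff neq0_conv)
  have an: "a < n" using assms(4,5) n0 by (metis dvd_imp_le insertCI le_neq_implies_less)
  have bn: "b < n" using assms(6,7) n0 by (metis dvd_imp_le insertCI le_neq_implies_less)
  have "real a * real l = real k * real b" using rat b0 l0 by (simp add: field_simps)
  hence eq: "a * l = b * k" by (metis of_nat_eq_iff of_nat_mult mult.commute)
  have kl: "k \<noteq> l" using eq assms(8) l0 by auto
  have klt: "k < l"
  proof (rule ccontr)
    assume "\<not> k < l" hence "l \<le> k" by simp
    hence "a * l \<le> a * k" by simp
    also have "\<dots> < b * k" using assms(10) k0 by simp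
    finally show False using eq by simp
  qed
  define M where "M = \<Prod>(P - {k,l})"
  have fin': "finite (P - {k,l})" using assms(1) by simp
  have M0: "M > 0" unfolding M_def using assms(2) by (metis DiffD1 prime_gt_0_nat prod_pos)
  have "\<Prod>P = k * \<Prod>(P - {k})" using prod.remove[OF assms(1) kP, of id] by simp
  moreover have "\<Prod>(P - {k}) = l * \<Prod>(P - {k} - {l})"
    using prod.remove[of "P - {k}" l id] assms(1) lP kl by simp
  moreover have "P - {k} - {l} = P - {k,l}" by auto
  ultimately have nkl: "n = k * (l * M)" using assms(3) M_def by simp
  have cokM: "coprime k M" unfolding M_def
    by (rule coprime_prod_not[OF fin']) (use assms(2) pk in auto)
  have colM: "coprime l M" unfolding M_def
    by (rule coprime_prod_not[OF fin']) (use assms(2) pl in auto)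
  have cokl: "coprime k l" using pk pl kl primes_coprime by blast
  have "k dvd a * l" using eq by simp
  hence "k dvd a" using cokl by (simp add: coprime_dvd_mult_left_iff)
  then obtain c where ac: "a = k * c" by blast
  have bc: "b = l * c" using eq ac k0 by (metis mult.commute mult.left_commute mult_left_cancel neq0_conv)
  have "l * c dvd l * (k * M)" using assms(6) bc nkl by (simp add: ac_simps)
  hence ckM: "c dvd k * M" using l0 by simp
  have "k * c dvd k * (l * M)" using assms(4) ac nkl by simp
  hence clM: "c dvd l * M" using k0 by simp
  have lnc: "\<not> l dvd c"
  proof
    assume "l dvd c" hence "l dvd k * M" using ckM by (rule dvd_trans)
    hence "l dvd k \<or> l dvd M" using pl prime_dvd_mult_iff by blast
    thus False using colM pl pk kl primes_dvd_imp_eq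
      by (metis coprime_common_divisor dvd_refl not_prime_unit)
  qed
  have knc: "\<not> k dvd c"
  proof
    assume "k dvd c" hence "k dvd l * M" using clM by (rule dvd_trans)
    hence "k dvd l \<or> k dvd M" using pk prime_dvd_mult_iff by blast
    thus False using cokM pk pl kl primes_dvd_imp_eq
      by (metis coprime_common_divisor dvd_refl not_prime_unit)
  qed
  have lna: "\<not> l dvd a" using ac lnc pl kl pk prime_dvd_mult_iff primes_dvd_imp_eq by metis
  have knb: "\<not> k dvd b" using bc knc pl kl pk prime_dvd_mult_iff primes_dvd_imp_eq by metis
  have cock: "coprime k c" using pk knc prime_imp_coprime by blast
  have cocl: "coprime l c" using pl lnc prime_imp_coprime by blast
  define G where "G y = gcd y n" for y
  define Na where "Na = {y. y < n \<and> y \<noteq> a \<and> (a dvd G y \<or> G y dvd a)}"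
  define Nb where "Nb = {y. y < n \<and> y \<noteq> b \<and> (b dvd G y \<or> G y dvd b)}"
  have Ga: "G a = a" unfolding G_def using assms(4) by (simp add: gcd_nat.absorb1)
  have Gb: "G b = b" unfolding G_def using assms(6) by (simp add: gcd_nat.absorb1)
  have dega: "cyc_pow_deg n a = card Na"
    unfolding cyc_pow_deg_def Na_def using adj_iff[OF n0 an] Ga
    by (smt (verit, ccfv_threshold) Collect_cong G_def cyc_pow_adj_def)
  have degb: "cyc_pow_deg n b = card Nb"
    unfolding cyc_pow_deg_def Nb_def using adj_iff[OF n0 bn] Gb
    by (smt (verit, ccfv_threshold) Collect_cong G_def cyc_pow_adj_def)
  have kn: "k dvd n" and ln: "l dvd n" using nkl by auto
  define E where "E = {y. k dvd y \<longleftrightarrow> l dvd y}"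
  have common: "Na \<inter> E = Nb \<inter> E"
  proof (rule Set.set_eqI)
    fix y
    have "(a dvd G y \<or> G y dvd a) \<longleftrightarrow> (b dvd G y \<or> G y dvd b)" if "y \<in> E"
    proof (cases "k dvd y")
      case True
      hence ly: "l dvd y" using that E_def by auto
      have kG: "k dvd G y" and lG: "l dvd G y" using True ly kn ln G_def by auto
      have "a dvd G y \<longleftrightarrow> c dvd G y" using ac kG cock
        by (metis divides_mult dvd_mult_right)
      moreover have "b dvd G y \<longleftrightarrow> c dvd G y" using bc lG cocl
        by (metis divides_mult dvd_mult_right)
      moreover have "\<not> G y dvd a" using lG lna dvd_trans by blast
      moreover have "\<not> G y dvd b" using kG knb dvd_trans by blast
      ultimately show ?thesis by blast
    next
      case False
      hence ly: "\<not> l dvd y" using that E_def by auto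
      have kG: "\<not> k dvd G y" and lG: "\<not> l dvd G y" using False ly G_def by auto
      have c1: "coprime (G y) k" using kG pk prime_imp_coprime coprime_commute by blast
      have c2: "coprime (G y) l" using lG pl prime_imp_coprime coprime_commute by blast
      have "G y dvd a \<longleftrightarrow> G y dvd c" using ac c1 coprime_dvd_mult_right_iff by simp
      moreover have "G y dvd b \<longleftrightarrow> G y dvd c" using bc c2 coprime_dvd_mult_right_iff by simp
      moreover have "\<not> a dvd G y" using ac kG dvd_mult_left by blast
      moreover have "\<not> b dvd G y" using bc lG dvd_mult_left by blast
      ultimately show ?thesis by blast
    qed
    moreover have "y \<in> E \<Longrightarrow> y \<noteq> a" using E_def ac lna by auto
    moreover have "y \<in> E \<Longrightarrow> y \<noteq> b" using E_def bc knb by auto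
    ultimately show "y \<in> Na \<inter> E \<longleftrightarrow> y \<in> Nb \<inter> E"
      unfolding Na_def Nb_def by auto
  qed
  define Da where "Da = {y. y < n \<and> k dvd y \<and> \<not> l dvd y \<and> (a dvd G y \<or> G y dvd a)}"
  define Db where "Db = {y. y < n \<and> l dvd y \<and> \<not> k dvd y \<and> (b dvd G y \<or> G y dvd b)}"
  have NaE: "Na - E = Da - {a}"
  proof (rule Set.set_eqI, rule iffI)
    fix y assume "y \<in> Na - E"
    moreover have False if "l dvd y" "\<not> k dvd y" "a dvd G y \<or> G y dvd a"
    proof -
      have "l dvd G y" "\<not> k dvd G y" using that ln G_def by auto
      thus False using that(3) ac lna dvd_trans dvd_mult_left by blast
    qed
    ultimately show "y \<in> Da - {a}" unfolding Na_def Da_def E_def by auto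
  qed (auto simp: Na_def Da_def E_def)
  have NbE: "Nb - E = Db - {b}"
  proof (rule Set.set_eqI, rule iffI)
    fix y assume "y \<in> Nb - E"
    moreover have False if "k dvd y" "\<not> l dvd y" "b dvd G y \<or> G y dvd b"
    proof -
      have "k dvd G y" "\<not> l dvd G y" using that kn G_def by auto
      thus False using that(3) bc knb dvd_trans dvd_mult_left by blast
    qed
    ultimately show "y \<in> Db - {b}" unfolding Nb_def Db_def E_def by auto
  qed (auto simp: Nb_def Db_def E_def)
  have finDa: "finite Da" unfolding Da_def by simp
  have finDb: "finite Db" unfolding Db_def by simp
  have aDa: "a \<in> Da" unfolding Da_def using an ac lna Ga by auto
  have bDb: "b \<in> Db" unfolding Db_def using bn bc knb Gb by auto
  have key: "card Db < card Da"
  proof -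
    have lM0: "l * M > 0" using l0 M0 by simp
    define Z where "Z y = (SOME z. z < l * M \<and> z mod l = (y div l) mod k mod l \<and> z mod M = (y div l) mod M)" for y
    have Zp: "Z y < l * M \<and> Z y mod l = (y div l) mod k \<and> Z y mod M = (y div l) mod M" for y
    proof -
      have "\<exists>z. z < l * M \<and> z mod l = (y div l) mod k mod l \<and> z mod M = (y div l) mod M"
        using crt_ex[OF colM l0 M0] by blast
      hence "Z y < l * M \<and> Z y mod l = (y div l) mod k mod l \<and> Z y mod M = (y div l) mod M"
        unfolding Z_def by (rule someI_ex)
      moreover have "(y div l) mod k mod l = (y div l) mod k"
        using klt k0 by (meson mod_less mod_less_divisor order.strict_trans)
      ultimately show ?thesis by simp
    qed
    define f where "f y = k * Z y" for y
    obtain z0 where z0: "z0 < l * M" "z0 mod l = k mod l" "z0 mod M = 1 mod M"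
      using crt_ex[OF colM l0 M0] by blast
    have z0l: "z0 mod l = k" using z0(2) klt by simp
    define w where "w = k * z0"
    have Gk: "G (k * z) = k * gcd z M" if "z mod l \<noteq> 0" for z
    proof -
      have "\<not> l dvd z" using that by auto
      hence "coprime z l" using pl prime_imp_coprime coprime_commute by blast
      hence "gcd z (l * M) = gcd z M" by (rule gcd_mult_right_left_cancel)
      thus ?thesis unfolding G_def nkl by (metis gcd_mult_distrib_nat)
    qed
    have wDa: "w \<in> Da"
    proof -
      have "w < n" unfolding w_def nkl using z0(1) k0 by simp
      moreover have "\<not> l dvd w"
      proof
        assume "l dvd w"
        hence "l dvd k \<or> l dvd z0" unfolding w_def using pl prime_dvd_mult_iff by blast
        thus False using z0l klt k0 pl pk kl primes_dvd_imp_eq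
          by (metis dvd_imp_mod_0 less_not_refl2)
      qed
      moreover have "gcd z0 M = gcd 1 M" using z0(3)
        by (metis cong_def cong_gcd_eq)
      hence "gcd z0 M = 1" by simp
      hence "G w = k" unfolding w_def using Gk[of z0] z0l k0 by simp
      ultimately show ?thesis unfolding Da_def w_def using ac by auto
    qed
    have inj: "inj_on f Db"
    proof (rule inj_onI)
      fix y1 y2 assume y1: "y1 \<in> Db" and y2: "y2 \<in> Db" and e: "f y1 = f y2"
      have Zeq: "Z y1 = Z y2" using e k0 unfolding f_def by simp
      have m1: "(y1 div l) mod k = (y2 div l) mod k" using Zp[of y1] Zp[of y2] Zeq by simp
      have m2: "(y1 div l) mod M = (y2 div l) mod M" using Zp[of y1] Zp[of y2] Zeq by simp
      have "[y1 div l = y2 div l] (mod k * M)"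
        using m1 m2 cokM coprime_cong_mult_nat unfolding cong_def by blast
      moreover have "y1 div l < k * M" "y2 div l < k * M"
        using y1 y2 unfolding Db_def nkl
        by (auto simp: less_mult_imp_div_less mult.left_commute)
      ultimately have "y1 div l = y2 div l" using cong_less_imp_eq_nat by blast
      moreover have "l dvd y1" "l dvd y2" using y1 y2 Db_def by auto
      ultimately show "y1 = y2" by (metis dvd_div_mult_self)
    qed
    have img: "f ` Db \<subseteq> Da - {w}"
    proof
      fix x assume "x \<in> f ` Db"
      then obtain y where y: "y \<in> Db" and x: "x = f y" by blast
      define y' where "y' = y div l"
      have yy: "y = l * y'" using y Db_def y'_def by auto
      have ky': "\<not> k dvd y'" using y yy Db_def by auto
      have y'k: "y' mod k \<noteq> 0" using ky' by (simp add: dvd_eq_mod_eq_0)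
      have zl: "Z y mod l = y' mod k" "Z y mod M = y' mod M" "Z y < l * M"
        using Zp[of y] y'_def by auto
      have "x < n" unfolding x f_def nkl using zl(3) k0 by simp
      moreover have "k dvd x" unfolding x f_def by simp
      moreover have "\<not> l dvd x"
      proof
        assume "l dvd x"
        hence "l dvd k \<or> l dvd Z y" unfolding x f_def using pl prime_dvd_mult_iff by blast
        thus False using zl(1) y'k pl pk kl primes_dvd_imp_eq by (metis dvd_imp_mod_0)
      qed
      moreover have "x \<noteq> w"
      proof
        assume "x = w"
        hence "Z y = z0" unfolding x f_def w_def using k0 by simp
        hence "y' mod k = k" using zl(1) z0l by simp
        thus False using k0 by (metis mod_less_divisor less_not_refl)
      qed
      moreover have "a dvd G x \<or> G x dvd a"
      proof -
        define g where "g = gcd y' M"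
        have "gcd (Z y) M = g" unfolding g_def using zl(2)
          by (metis cong_def cong_gcd_eq)
        hence Gx: "G x = k * g" unfolding x f_def using Gk[of "Z y"] zl(1) y'k by simp
        have "coprime y' k" using ky' pk prime_imp_coprime coprime_commute by blast
        hence "gcd y' (k * M) = g" unfolding g_def by (rule gcd_mult_right_left_cancel)
        hence Gy: "G y = l * g" unfolding G_def yy nkl
          by (metis gcd_mult_distrib_nat mult.left_commute)
        have "b dvd G y \<or> G y dvd b" using y Db_def by auto
        hence "c dvd g \<or> g dvd c" unfolding Gy bc using l0 by simp
        thus ?thesis unfolding Gx ac using k0 by simp
      qed
      ultimately show "x \<in> Da - {w}" unfolding Da_def by auto
    qed
    have "card Db = card (f ` Db)" using inj card_image by metis
    also have "\<dots> \<le> card (Da - {w})" using img finDa by (simp add: card_mono)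
    also have "\<dots> < card Da" using wDa finDa by (metis card_Diff1_less)
    finally show ?thesis .
  qed
  have "card Na = card (Na \<inter> E) + card (Da - {a})"
    using card_Int_Diff[of Na E] NaE Na_def by simp
  also have "\<dots> = card (Na \<inter> E) + (card Da - 1)" using finDa aDa by simp
  finally have A: "card Na = card (Na \<inter> E) + (card Da - 1)" .
  have "card Nb = card (Nb \<inter> E) + card (Db - {b})"
    using card_Int_Diff[of Nb E] NbE Nb_def by simp
  also have "\<dots> = card (Nb \<inter> E) + (card Db - 1)" using finDb bDb by simp
  finally have B: "card Nb = card (Na \<inter> E) + (card Db - 1)" using common by simp
  have "card Db > 0" using finDb bDb card_gt_0_iff by blast
  then show ?thesis using A B dega degb key by simp
qed

end
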